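(* Let $K\subset\mathbb{R}^n$ be a convex body and $c\in\mathbb{R}^n$ such that $c+r(K)\mathbb{B}$ is an inball and $\mathbb{B}$ is the circumball of $K$. Let $k\in\{2,\dots,n+1\}$ and $p^1,\dots,p^k\in K\cap\mathbb{S}$ with $0\in\mathrm{conv}\{p^1,\dots,p^k\}$, and set $T':=\mathrm{conv}\{p^1,\dots,p^k\}$ and $C:=\mathrm{conv}\big(T'\cup(c+r(K)\mathbb{B})\big)$. Then \[ D(C)=\max\{D(T'),\ \|p^i-c\|+r(C)\ :\ i\in[k]\}. \]
   Context: $\mathbb{B}$, $\mathbb{S}$ are the Euclidean unit ball and sphere; $r(\cdot)$ is the inradius (radius of a largest contained ball), $D(\cdot)$ the diameter. The circumball is the smallest ball containing $K$; an inball is a largest ball contained in $K$. $[k]=\{1,\dots,k\}$. *)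

theory Defs
  imports "HOL-Analysis.Analysis"
begin

definition convex_body :: "'a::euclidean_space set \<Rightarrow> bool" where
  "convex_body K \<longleftrightarrow> compact K \<and> convex K \<and> interior K \<noteq> {}"

definition inradius :: "'a::euclidean_space set \<Rightarrow> real" where
  "inradius K = Sup {\<rho>. \<rho> \<ge> 0 \<and> (\<exists>x. cball x \<rho> \<subseteq> K)}"

definition is_inball :: "'a::euclidean_space \<Rightarrow> real \<Rightarrow> 'a set \<Rightarrow> bool" where
  "is_inball x \<rho> K \<longleftrightarrow> cball x \<rho> \<subseteq> K \<and> (\<forall>y \<sigma>. cball y \<sigma> \<subseteq> K \<longrightarrow> \<sigma> \<le> \<rho>)"

definition is_circumball :: "'a::euclidean_space \<Rightarrow> real \<Rightarrow> 'a set \<Rightarrow> bool" where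
  "is_circumball x \<rho> K \<longleftrightarrow> K \<subseteq> cball x \<rho> \<and> (\<forall>y \<sigma>. K \<subseteq> cball y \<sigma> \<longrightarrow> \<rho> \<le> \<sigma>)"

end

theory Submission
  imports Defs
begin

theorem corollary5p6:
  fixes K :: "(real ^ 'n) set" and c :: "real ^ 'n" and k :: nat and p :: "nat \<Rightarrow> real ^ 'n"
  assumes "convex_body K"
    and "is_inball c (inradius K) K"
    and "is_circumball 0 1 K"
    and "2 \<le> k" and "k \<le> CARD('n) + 1"
    and "\<And>i. i \<in> {1..k} \<Longrightarrow> p i \<in> K \<inter> sphere 0 1"
    and "0 \<in> convex hull (p ` {1..k})"
  shows "diameter (convex hull (convex hull (p ` {1..k}) \<union> cball c (inradius K))) =
    Max ({diameter (convex hull (p ` {1..k}))} \<union>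
         {norm (p i - c) + inradius (convex hull (convex hull (p ` {1..k}) \<union> cball c (inradius K))) | i. i \<in> {1..k}})"
proof -
  define r where "r = inradius K"
  define T where "T = convex hull (p ` {1..k})"
  define S where "S = T \<union> cball c r"
  define C where "C = convex hull S"
  have convK: "convex K" and compK: "compact K" using assms(1) by (auto simp: convex_body_def)
  have pK: "\<And>i. i \<in> {1..k} \<Longrightarrow> p i \<in> K" and pn: "\<And>i. i \<in> {1..k} \<Longrightarrow> norm (p i) = 1"
    using assms(6) by auto
  have ballK: "cball c r \<subseteq> K" and rmax: "\<And>y \<sigma>. cball y \<sigma> \<subseteq> K \<Longrightarrow> \<sigma> \<le> r"
    using assms(2) by (auto simp: is_inball_def r_def)
  have K1: "K \<subseteq> cball 0 1" using assms(3) by (auto simp: is_circumball_def)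
  have k1: "1 \<in> {1..k}" using assms(4) by auto
  have r0: "0 \<le> r"
    using rmax[of "p 1" 0] pK[OF k1] by auto
  have cr: "norm c + r \<le> 1"
    using cball_subset_cball_iff[of c r 0 1] ballK K1 r0 by auto
  have pcr: "r \<le> norm (p i - c)" if "i \<in> {1..k}" for i
    using norm_triangle_ineq2[of "p i" c] pn[OF that] cr by linarith
  have TK: "T \<subseteq> K" unfolding T_def using pK convK by (intro hull_minimal) auto
  have SK: "S \<subseteq> K" using TK ballK by (auto simp: S_def)
  have CK: "C \<subseteq> K" unfolding C_def using SK convK by (intro hull_minimal) auto
  have SC: "S \<subseteq> C" unfolding C_def by (rule hull_subset)
  have compT: "compact T" unfolding T_def by (intro compact_convex_hull finite_imp_compact) auto
  have compS: "compact S" unfolding S_def using compT by auto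
  have bC: "bounded C" unfolding C_def using compS compact_convex_hull compact_imp_bounded by blast
  have bT: "bounded T" using compT compact_imp_bounded by blast
  have rC: "inradius C = r"
    unfolding inradius_def
  proof (rule cSup_eq_maximum)
    show "r \<in> {\<rho>. 0 \<le> \<rho> \<and> (\<exists>x. cball x \<rho> \<subseteq> C)}" using r0 SC by (auto simp: S_def)
    show "\<And>x. x \<in> {\<rho>. 0 \<le> \<rho> \<and> (\<exists>x. cball x \<rho> \<subseteq> C)} \<Longrightarrow> x \<le> r"
      using CK rmax by blast
  qed
  define A where "A = {diameter T} \<union> {norm (p i - c) + r | i. i \<in> {1..k}}"
  have finA: "finite A" unfolding A_def by auto
  have neA: "A \<noteq> {}" unfolding A_def by auto
  define M where "M = Max A"
  have geM: "a \<le> M" if "a \<in> A" for a using finA that M_def by auto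
  have MA: "M \<in> A" using finA neA M_def by auto
  have pM: "norm (p i - c) + r \<le> M" if "i \<in> {1..k}" for i using geM that unfolding A_def by blast
  have TM: "diameter T \<le> M" using geM unfolding A_def by blast
  have TcM: "T \<subseteq> cball c (M - r)"
    unfolding T_def using pM by (intro hull_minimal) (force simp: dist_norm norm_minus_commute, simp)
  have rM: "2 * r \<le> M" using pM[OF k1] pcr[OF k1] by linarith
  have Sb: "norm (x - y) \<le> M" if xy: "x \<in> S" "y \<in> S" for x y
  proof -
    consider "x \<in> T" "y \<in> T" | "x \<in> T" "y \<in> cball c r" | "x \<in> cball c r" "y \<in> T"
      | "x \<in> cball c r" "y \<in> cball c r" using xy S_def by blast
    then show ?thesis
    proof cases
      case 1 then show ?thesis using diameter_bounded_bound[OF bT] TM by (fastforce simp: dist_norm)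
    next
      case 2
      have "norm (x - y) \<le> dist x c + dist c y" by (metis dist_norm dist_triangle)
      then show ?thesis using 2 TcM by (auto simp: dist_commute)
    next
      case 3
      have "norm (x - y) \<le> dist x c + dist c y" by (metis dist_norm dist_triangle)
      then show ?thesis using 3 TcM by (auto simp: dist_commute)
    next
      case 4
      have "norm (x - y) \<le> dist x c + dist c y" by (metis dist_norm dist_triangle)
      then show ?thesis using 4 rM by (auto simp: dist_commute)
    qed
  qed
  have Cb: "norm (x - y) \<le> M" if "x \<in> C" "y \<in> C" for x y
  proof -
    have "S \<subseteq> cball x M" if "x \<in> S" for x
      using Sb that by (auto simp: dist_norm)
    hence "C \<subseteq> cball x M" if "x \<in> S" for x
      unfolding C_def using that by (intro hull_minimal) auto
    hence "S \<subseteq> cball y M" using \<open>y \<in> C\<close> by (force simp: dist_norm norm_minus_commute subset_iff)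
    hence "C \<subseteq> cball y M" unfolding C_def by (intro hull_minimal) auto
    thus ?thesis using \<open>x \<in> C\<close> by (auto simp: dist_norm norm_minus_commute)
  qed
  have up: "diameter C \<le> M" by (rule diameter_le) (use Cb rM r0 in auto)
  have low: "a \<le> diameter C" if "a \<in> A" for a
  proof -
    have "T \<subseteq> C" using SC S_def by auto
    then have d1: "diameter T \<le> diameter C" using diameter_subset bC by blast
    have d2: "norm (p i - c) + r \<le> diameter C" if i: "i \<in> {1..k}" for i
    proof -
      obtain y where y: "y \<in> cball c r" "dist (p i) y = norm (p i - c) + r"
      proof (cases "p i = c")
        case True
        obtain u :: "real ^ 'n" where "norm u = r" using vector_choose_size r0 by blast
        then show ?thesis using True by (intro that[of "c + u"]) (auto simp: dist_norm)
      next
        case False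
        define n where "n = norm (c - p i)"
        have n0: "n > 0" using False n_def by auto
        define y where "y = c + (r / n) *\<^sub>R (c - p i)"
        have "p i - y = - ((1 + r / n) *\<^sub>R (c - p i))" by (simp add: y_def algebra_simps)
        hence "dist (p i) y = (1 + r / n) * n" using n0 r0
          by (simp add: dist_norm n_def)
        also have "\<dots> = n + r" using n0 by (simp add: field_simps)
        finally have "dist (p i) y = norm (p i - c) + r" by (simp add: n_def norm_minus_commute)
        moreover have "y \<in> cball c r" using n0 r0
          by (simp add: y_def dist_norm n_def)
        ultimately show ?thesis using that by blast
      qed
      have "p i \<in> C" using SC hull_subset[of "p ` {1..k}" convex] i unfolding S_def T_def by blast
      moreover have "y \<in> C" using SC y(1) S_def by auto
      ultimately show ?thesis using diameter_bounded_bound[OF bC] y(2) by metis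
    qed
    show ?thesis using that d1 d2 unfolding A_def by blast
  qed
  have "diameter C = M" using up low MA by (meson antisym)
  moreover have "A = {diameter T} \<union> {norm (p i - c) + inradius C | i. i \<in> {1..k}}"
    unfolding A_def rC ..
  ultimately have "diameter C = Max ({diameter T} \<union> {norm (p i - c) + inradius C | i. i \<in> {1..k}})"
    unfolding M_def by simp
  then show ?thesis unfolding C_def S_def T_def r_def .
qed

end
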